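(* Let $n$ be a positive integer, let $\hat y\in\mathbb{R}^n$ satisfy $\mathrm{rank}(\mathcal{H}_2(\hat y))=2$, and let $y^*$ be an optimal solution of $$\min_{y\in\mathbb{R}^n}\ \tfrac12\|y-\hat y\|^2\quad\text{s.t.}\quad\mathrm{rank}(\mathcal{H}_2(y))\le1.$$ Then $\mathrm{rank}(\mathcal{H}_2(y^* ))=1$.
   Context: For $x\in\mathbb{R}^n$, $\mathcal{H}_2(x)\in\mathbb{R}^{2\times(n-1)}$ is the Hankel matrix with $(i,j)$ entry $x(i+j-1)$, i.e. first row $(x(1),\dots,x(n-1))$ and second row $(x(2),\dots,x(n))$. *)

theory Defs
  imports "Jordan_Normal_Form.DL_Rank"
begin

text \<open>Vectors in R^n are JNF vectors of dimension n, indexed 0..n-1.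
  The 2 x (n-1) Hankel matrix: entry (i,j) (0-based) is x(i+j),
  i.e. first row x(0..n-2), second row x(1..n-1).\<close>
definition hankel2 :: "real vec \<Rightarrow> real mat" where
  "hankel2 x = mat 2 (dim_vec x - 1) (\<lambda>(i, j). x $ (i + j))"

definition rank2 :: "real mat \<Rightarrow> nat" where
  "rank2 A = vec_space.rank 2 A"

definition obj :: "real vec \<Rightarrow> real vec \<Rightarrow> real" where
  "obj yhat y = (1/2) * (\<Sum>i<dim_vec y. (y $ i - yhat $ i)^2)"

end

theory Submission
  imports Defs "HOL-Analysis.Poly_Roots"
begin

lemma hankel2_carrier: "hankel2 x \<in> carrier_mat 2 (dim_vec x - 1)"
  unfolding hankel2_def by simp

lemma hankel2_add:
  assumes "dim_vec a = dim_vec b"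
  shows "hankel2 (a + b) = hankel2 a + hankel2 b"
  unfolding hankel2_def using assms
  by (intro eq_matI) auto

lemma rank_geom:
  fixes c r :: real
  shows "rank2 (hankel2 (vec n (\<lambda>i. c * r ^ i))) \<le> 1"
  unfolding rank2_def
proof (rule vec_space.rank_le_1_product_entries[where f = "\<lambda>i. c * r ^ i" and g = "\<lambda>j. r ^ j"])
  show "hankel2 (vec n (\<lambda>i. c * r ^ i)) \<in> carrier_mat 2 (n - 1)"
    using hankel2_carrier[of "vec n (\<lambda>i. c * r ^ i)"] by simp
  fix i j assume "i < dim_row (hankel2 (vec n (\<lambda>i. c * r ^ i)))"
    "j < dim_col (hankel2 (vec n (\<lambda>i. c * r ^ i)))"
  then show "hankel2 (vec n (\<lambda>i. c * r ^ i)) $$ (i, j) = c * r ^ i * r ^ j"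
    unfolding hankel2_def by (auto simp: power_add)
qed

theorem proposition4p7:
  fixes n :: nat and yhat ystar :: "real vec"
  assumes "n > 0"
    and "yhat \<in> carrier_vec n"
    and "rank2 (hankel2 yhat) = 2"
    and "ystar \<in> carrier_vec n"
    and "rank2 (hankel2 ystar) \<le> 1"
    and "\<forall>y \<in> carrier_vec n. rank2 (hankel2 y) \<le> 1 \<longrightarrow> obj yhat ystar \<le> obj yhat y"
  shows "rank2 (hankel2 ystar) = 1"
proof (rule ccontr)
  assume "rank2 (hankel2 ystar) \<noteq> 1"
  with assms(5) have r0: "rank2 (hankel2 ystar) = 0" by simp
  define d where "d i = ystar $ i - yhat $ i" for i
  have dimy: "dim_vec ystar = n" using assms(4) by simp
  have key: "(\<Sum>i<n. d i * r ^ i) = 0" for r :: real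
  proof -
    define B where "B = (\<Sum>i<n. d i * r ^ i)"
    define G where "G = (\<Sum>i<n. (r ^ i)^2)"
    define D where "D = (\<Sum>i<n. (d i)^2)"
    have "G \<ge> (\<Sum>i\<in>{0}. (r ^ i)^2)" unfolding G_def
      by (rule sum_mono2) (use assms(1) in auto)
    then have Gpos: "G > 0" by simp
    define c where "c = - B / G"
    define y where "y = ystar + vec n (\<lambda>i. c * r ^ i)"
    have yc: "y \<in> carrier_vec n" unfolding y_def using assms(4) by simp
    have "hankel2 y = hankel2 ystar + hankel2 (vec n (\<lambda>i. c * r ^ i))"
      unfolding y_def by (rule hankel2_add) (simp add: dimy)
    then have "rank2 (hankel2 y) \<le> rank2 (hankel2 ystar) + rank2 (hankel2 (vec n (\<lambda>i. c * r ^ i)))"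
      unfolding rank2_def
      using vec_space.rank_subadditive[of "hankel2 ystar" 2 "n - 1" "hankel2 (vec n (\<lambda>i. c * r ^ i))"]
        hankel2_carrier[of ystar] hankel2_carrier[of "vec n (\<lambda>i. c * r ^ i)"] dimy by simp
    also have "\<dots> \<le> 1" using r0 rank_geom[of n c r] by simp
    finally have "obj yhat ystar \<le> obj yhat y" using assms(6) yc by blast
    moreover have "obj yhat ystar = D / 2" unfolding obj_def D_def d_def dimy by simp
    moreover have "obj yhat y = (D + 2 * c * B + c^2 * G) / 2"
    proof -
      have "obj yhat y = (1/2) * (\<Sum>i<n. (d i + c * r ^ i)^2)"
        unfolding obj_def y_def d_def using dimy by (simp add: algebra_simps)
      also have "(\<Sum>i<n. (d i + c * r ^ i)^2) = (\<Sum>i<n. (d i)^2 + 2 * c * (d i * r ^ i) + c^2 * (r^i)^2)"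
        by (rule sum.cong) (auto simp: power2_eq_square algebra_simps)
      also have "\<dots> = D + 2 * c * B + c^2 * G"
        unfolding D_def B_def G_def by (simp add: sum.distrib sum_distrib_left)
      finally show ?thesis by simp
    qed
    ultimately have "0 \<le> 2 * c * B + c^2 * G" by simp
    also have "2 * c * B + c^2 * G = -((B^2) / G)" unfolding c_def using Gpos
      by (simp add: field_simps power2_eq_square)
    finally have "(B^2) / G \<le> 0" by simp
    then have "B^2 \<le> 0" using Gpos by (simp add: divide_le_0_iff)
    then show ?thesis unfolding B_def by simp
  qed
  have "{..<n} = {..n-1}" using assms(1) by auto
  then have "\<forall>r::real. (\<Sum>i\<le>n-1. d i * r ^ i) = 0" using key by simp
  then have "\<forall>k. k \<le> n - 1 \<longrightarrow> d k = 0" using polyfun_eq_0 by blast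
  then have "ystar = yhat" using assms(1,2,4) unfolding d_def
    by (intro eq_vecI) auto
  then show False using assms(3) r0 by simp
qed

end
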